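(* Let $k\in\mathbb{N}$, let $\alpha_0,\dots,\alpha_k>0$, $\boldsymbol{\alpha}=[\alpha_0,\dots,\alpha_k]^\top$, and let $\boldsymbol{X}=[X_0,\dots,X_k]^\top$ have the Dirichlet distribution with density $\frac1{\mathcal{B}(\boldsymbol{\alpha})}\prod_{i=0}^kx_i^{\alpha_i-1}$ on $\{x_i>0,\ \sum_{i=0}^kx_i=1\}$, where $\mathcal{B}(\boldsymbol{\alpha})=\prod_{i=0}^k\Gamma(\alpha_i)/\Gamma(\sum_{i=0}^k\alpha_i)$. Let $\mu_i=\alpha_i/\sum_{\ell=0}^k\alpha_\ell$, $\boldsymbol{\mu}=[\mu_0,\dots,\mu_k]^\top$. Let $\boldsymbol{\mathcal{X}}_1,\dots,\boldsymbol{\mathcal{X}}_n$ be independent random vectors with the same distribution as $\boldsymbol{X}$ and $\overline{\boldsymbol{\mathcal{X}}}_n=\frac1n\sum_{\ell=1}^n\boldsymbol{\mathcal{X}}_\ell$. Let $z_0,\dots,z_k$ be positive reals with $\sum_{\ell=0}^kz_\ell=1$, $\boldsymbol{z}=[z_0,\dots,z_k]^\top$, and $\widehat{\boldsymbol{\alpha}}=[\widehat\alpha_0,\dots,\widehat\alpha_k]^\top$ with $\widehat\alpha_i=\alpha_0z_i/z_0$. If $\boldsymbol{z}\boldsymbol{\prec}\boldsymbol{\mu}$, then $$\Pr\{\overline{\boldsymbol{\mathcal{X}}}_n\boldsymbol{\prec}\boldsymbol{z}\}\le\Big[\frac{\mathcal{B}(\widehat{\boldsymbol{\alpha}})}{\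mathcal{B}(\boldsymbol{\alpha})}\prod_{i=1}^k\frac{z_i^{\alpha_i}}{z_i^{\widehat\alpha_i}}\Big]^n.$$
   Context: For vectors $\boldsymbol{x}=[x_0,\dots,x_k]^\top,\boldsymbol{y}=[y_0,\dots,y_k]^\top$, $\boldsymbol{x}\boldsymbol{\prec}\boldsymbol{y}$ means $x_i\le y_i$ for $i=1,\dots,k$ (index $0$ is not compared). *)

theory Defs
  imports "HOL-Probability.Probability"
begin

definition mbeta :: "nat \<Rightarrow> (nat \<Rightarrow> real) \<Rightarrow> real" where
  "mbeta k a = (\<Prod>i=0..k. Gamma (a i)) / Gamma (\<Sum>i=0..k. a i)"

definition dirichlet_pdf :: "nat \<Rightarrow> (nat \<Rightarrow> real) \<Rightarrow> (nat \<Rightarrow> real) \<Rightarrow> real" where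
  "dirichlet_pdf k a x = (1 / mbeta k a) * (\<Prod>i=0..k. x i powr (a i - 1))"

definition simplex_embed :: "nat \<Rightarrow> (nat \<Rightarrow> real) \<Rightarrow> (nat \<Rightarrow> real)" where
  "simplex_embed k y = (\<lambda>i\<in>{0..k}. if i = 0 then 1 - (\<Sum>j=1..k. y j) else y i)"

text \<open>The Dirichlet distribution Dir(alpha) on vectors indexed by {0..k}: the density above
  with respect to Lebesgue measure on the free coordinates x_1..x_k, restricted to the
  open simplex {x_i > 0, sum x_i = 1}, pushed onto the (k+1)-dimensional space.\<close>
definition dirichlet :: "nat \<Rightarrow> (nat \<Rightarrow> real) \<Rightarrow> (nat \<Rightarrow> real) measure" where
  "dirichlet k a =
     distr
       (density (PiM {1..k} (\<lambda>_. lborel))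
          (\<lambda>y. ennreal (indicator {y. (\<forall>i\<in>{1..k}. y i > 0) \<and> (\<Sum>j=1..k. y j) < 1} y
                         * dirichlet_pdf k a (simplex_embed k y))))
       (PiM {0..k} (\<lambda>_. borel))
       (simplex_embed k)"

end

theory Submission
  imports Defs
begin


lemma beta1d:
  fixes a b s :: real
  assumes a: "a > 0" and b: "b > 0" and s: "s > 0"
  shows "(\<integral>\<^sup>+t. ennreal (indicator {0<..<s} t * (t powr (a - 1) * (s - t) powr (b - 1))) \<partial>lborel)
         = ennreal (s powr (a + b - 1) * Beta a b)"
proof -
  have hi: "((\<lambda>t. t powr (a - 1) * (1 - t) powr (b - 1)) has_integral Beta a b) {0<..<1}"
    using has_integral_Beta_real[OF a b] by (simp add: has_integral_Icc_iff_Ioo)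
  have base: "(\<integral>\<^sup>+t. ennreal (t powr (a - 1) * (1 - t) powr (b - 1)) * indicator {0<..<1} t \<partial>lborel)
      = ennreal (Beta a b)"
    by (rule nn_integral_has_integral_lebesgue'[OF _ hi]) auto
  have "(\<integral>\<^sup>+t. ennreal (indicator {0<..<s} t * (t powr (a - 1) * (s - t) powr (b - 1))) \<partial>lborel)
     = ennreal \<bar>s\<bar> * (\<integral>\<^sup>+x. ennreal (indicator {0<..<s} (0 + s * x) * ((0 + s * x) powr (a - 1) * (s - (0 + s * x)) powr (b - 1))) \<partial>lborel)"
    by (rule nn_integral_real_affine) (use s in auto)
  also have "(\<integral>\<^sup>+x. ennreal (indicator {0<..<s} (0 + s * x) * ((0 + s * x) powr (a - 1) * (s - (0 + s * x)) powr (b - 1))) \<partial>lborel)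
      = (\<integral>\<^sup>+x. ennreal (s powr (a - 1) * s powr (b - 1)) * (ennreal (x powr (a - 1) * (1 - x) powr (b - 1)) * indicator {0<..<1} x) \<partial>lborel)"
  proof (intro nn_integral_cong)
    fix x :: real
    have e1: "(0 < s * x \<and> s * x < s) \<longleftrightarrow> (0 < x \<and> x < 1)"
      using s by (simp add: zero_less_mult_iff)
    show "ennreal (indicator {0<..<s} (0 + s * x) * ((0 + s * x) powr (a - 1) * (s - (0 + s * x)) powr (b - 1))) =
          ennreal (s powr (a - 1) * s powr (b - 1)) * (ennreal (x powr (a - 1) * (1 - x) powr (b - 1)) * indicator {0<..<1} x)"
    proof (cases "0 < x \<and> x < 1")
      case True
      have "s - s * x = s * (1 - x)" by (simp add: algebra_simps)
      then show ?thesis using True s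
        by (simp add: indicator_def powr_mult ennreal_mult'[symmetric] mult_ac)
    next
      case False
      then show ?thesis using e1 by (auto simp: indicator_def)
    qed
  qed
  also have "\<dots> = ennreal (s powr (a - 1) * s powr (b - 1)) * ennreal (Beta a b)"
    by (subst nn_integral_cmult) (auto simp: base)
  also have "ennreal \<bar>s\<bar> * (ennreal (s powr (a - 1) * s powr (b - 1)) * ennreal (Beta a b))
     = ennreal (s powr (a + b - 1) * Beta a b)"
  proof -
    have "s * (s powr (a - 1) * s powr (b - 1)) = s powr (a + b - 1)"
    proof -
      have "s * (s powr (a - 1) * s powr (b - 1)) = s powr 1 * (s powr (a - 1) * s powr (b - 1))"
        using s by simp
      also have "\<dots> = s powr (1 + (a - 1) + (b - 1))" by (simp only: powr_add)
      also have "1 + (a - 1) + (b - 1) = a + b - 1" by simp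
      finally show ?thesis .
    qed
    moreover have "Beta a b \<ge> 0" using a b by (simp add: Beta_def)
    ultimately show ?thesis using s
      by (simp add: ennreal_mult'[symmetric] ennreal_mult[symmetric] mult.assoc)
  qed
  finally show ?thesis .
qed

definition dirF :: "nat set \<Rightarrow> real \<Rightarrow> real \<Rightarrow> (nat \<Rightarrow> real) \<Rightarrow> (nat \<Rightarrow> real) \<Rightarrow> real" where
  "dirF A s c0 c y = indicator {y. (\<forall>i\<in>A. y i > 0) \<and> (\<Sum>j\<in>A. y j) < s} y *
      ((s - (\<Sum>j\<in>A. y j)) powr (c0 - 1) * (\<Prod>i\<in>A. y i powr (c i - 1)))"

lemma dirF_meas: "(\<lambda>y. ennreal (dirF A s c0 c y)) \<in> borel_measurable (PiM A (\<lambda>_. lborel))"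
  unfolding dirF_def by measurable

lemma dir_int:
  fixes c :: "nat \<Rightarrow> real" and c0 :: real
  assumes "finite A" "\<forall>i\<in>A. c i > 0" "c0 > 0" "s > 0"
  shows "(\<integral>\<^sup>+y. ennreal (dirF A s c0 c y) \<partial>PiM A (\<lambda>_. lborel))
     = ennreal (s powr (c0 + (\<Sum>i\<in>A. c i) - 1) * ((\<Prod>i\<in>A. Gamma (c i)) * Gamma c0 / Gamma (c0 + (\<Sum>i\<in>A. c i))))"
  using assms
proof (induction A arbitrary: s rule: finite_induct)
  case empty
  have "Gamma c0 \<noteq> 0" using empty by (metis Gamma_real_pos less_irrefl)
  then show ?case using empty
    by (simp add: PiM_empty dirF_def)
next
  case (insert i A s)
  interpret product_sigma_finite "\<lambda>_. lborel" by standard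
  define C where "C = c0 + (\<Sum>i\<in>A. c i)"
  define G where "G = (\<Prod>i\<in>A. Gamma (c i)) * Gamma c0 / Gamma C"
  have Cpos: "C > 0" unfolding C_def using insert by (simp add: sum_pos2 add_pos_nonneg sum_nonneg less_imp_le)
  have Gnn: "G \<ge> 0" unfolding G_def using insert Cpos
    by (intro divide_nonneg_pos mult_nonneg_nonneg prod_nonneg) (auto intro: less_imp_le Gamma_real_pos)
  have ci: "c i > 0" using insert by auto
  have "(\<integral>\<^sup>+y. ennreal (dirF (insert i A) s c0 c y) \<partial>PiM (insert i A) (\<lambda>_. lborel))
      = (\<integral>\<^sup>+t. \<integral>\<^sup>+x. ennreal (dirF (insert i A) s c0 c (x(i := t))) \<partial>PiM A (\<lambda>_. lborel) \<partial>lborel)"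
    using insert.hyps by (subst product_nn_integral_insert_rev) (auto intro: dirF_meas)
  also have "\<dots> = (\<integral>\<^sup>+t. \<integral>\<^sup>+x. ennreal (indicator {0<..<s} t * t powr (c i - 1)) * ennreal (dirF A (s - t) c0 c x) \<partial>PiM A (\<lambda>_. lborel) \<partial>lborel)"
  proof (intro nn_integral_cong)
    fix t :: real and x :: "nat \<Rightarrow> real"
    have sm: "(\<Sum>j\<in>insert i A. (x(i := t)) j) = t + (\<Sum>j\<in>A. x j)"
      using insert.hyps by (simp add: sum.insert) (intro sum.cong, auto)
    have pr: "(\<Prod>j\<in>insert i A. (x(i := t)) j powr (c j - 1)) = t powr (c i - 1) * (\<Prod>j\<in>A. x j powr (c j - 1))"
    proof -
      have "(\<Prod>j\<in>A. (x(i := t)) j powr (c j - 1)) = (\<Prod>j\<in>A. x j powr (c j - 1))"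
        using insert.hyps by (intro prod.cong) auto
      then show ?thesis using insert.hyps by (simp add: prod.insert)
    qed
    have ps: "(\<forall>j\<in>insert i A. (x(i := t)) j > 0) \<longleftrightarrow> t > 0 \<and> (\<forall>j\<in>A. x j > 0)"
      using insert.hyps by auto
    have nn: "(\<forall>j\<in>A. x j > 0) \<Longrightarrow> (\<Sum>j\<in>A. x j) \<ge> 0" by (simp add: sum_nonneg less_imp_le)
    show "ennreal (dirF (insert i A) s c0 c (x(i := t))) =
          ennreal (indicator {0<..<s} t * t powr (c i - 1)) * ennreal (dirF A (s - t) c0 c x)"
    proof -
      have ind: "indicator {y. (\<forall>j\<in>insert i A. y j > 0) \<and> (\<Sum>j\<in>insert i A. y j) < s} (x(i := t))
         = (indicator {0<..<s} t * indicator {y. (\<forall>j\<in>A. y j > 0) \<and> (\<Sum>j\<in>A. y j) < s - t} x :: real)"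
        using ps sm nn insert.hyps by (auto simp: indicator_def)
      have e: "s - (t + (\<Sum>j\<in>A. x j)) = s - t - (\<Sum>j\<in>A. x j)" by simp
      show ?thesis unfolding dirF_def ind sm pr e
        by (subst ennreal_mult'[symmetric]) (auto simp: mult_ac)
    qed
  qed
  also have "\<dots> = (\<integral>\<^sup>+t. ennreal (indicator {0<..<s} t * t powr (c i - 1)) * (\<integral>\<^sup>+x. ennreal (dirF A (s - t) c0 c x) \<partial>PiM A (\<lambda>_. lborel)) \<partial>lborel)"
    by (intro nn_integral_cong nn_integral_cmult dirF_meas)
  also have "\<dots> = (\<integral>\<^sup>+t. ennreal G * ennreal (indicator {0<..<s} t * (t powr (c i - 1) * (s - t) powr (C - 1))) \<partial>lborel)"
  proof (intro nn_integral_cong)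
    fix t :: real
    show "ennreal (indicator {0<..<s} t * t powr (c i - 1)) * (\<integral>\<^sup>+x. ennreal (dirF A (s - t) c0 c x) \<partial>PiM A (\<lambda>_. lborel))
        = ennreal G * ennreal (indicator {0<..<s} t * (t powr (c i - 1) * (s - t) powr (C - 1)))"
    proof (cases "t \<in> {0<..<s}")
      case True
      then have "(\<integral>\<^sup>+x. ennreal (dirF A (s - t) c0 c x) \<partial>PiM A (\<lambda>_. lborel)) = ennreal ((s - t) powr (C - 1) * G)"
        using insert by (subst insert.IH) (auto simp: C_def G_def)
      then show ?thesis using True Gnn
        by (simp add: ennreal_mult'[symmetric] ennreal_mult[symmetric] mult_ac)
    qed simp
  qed
  also have "\<dots> = ennreal G * ennreal (s powr (c i + C - 1) * Beta (c i) C)"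
    using ci Cpos insert.prems by (subst nn_integral_cmult) (auto simp: beta1d)
  also have "\<dots> = ennreal (s powr (c0 + (\<Sum>i\<in>insert i A. c i) - 1) * ((\<Prod>i\<in>insert i A. Gamma (c i)) * Gamma c0 / Gamma (c0 + (\<Sum>i\<in>insert i A. c i))))"
  proof -
    have gC: "Gamma C \<noteq> 0" using Cpos by (metis Gamma_real_pos less_irrefl)
    have "G * (s powr (c i + C - 1) * Beta (c i) C) = s powr (c0 + (\<Sum>i\<in>insert i A. c i) - 1) * ((\<Prod>i\<in>insert i A. Gamma (c i)) * Gamma c0 / Gamma (c0 + (\<Sum>i\<in>insert i A. c i)))"
      using insert.hyps gC unfolding G_def C_def Beta_def
      by (simp add: field_simps)
    moreover have "Beta (c i) C \<ge> 0" using ci Cpos by (simp add: Beta_def Gamma_real_pos less_imp_le)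
    ultimately show ?thesis using Gnn by (simp add: ennreal_mult[symmetric])
  qed
  finally show ?case .
qed



lemma amgm_step:
  fixes x :: "nat \<Rightarrow> real" and z b :: real and n :: nat
  assumes n: "n \<ge> 1" and xpos: "\<forall>l\<in>{1..n}. x l > 0" and z: "z > 0"
    and avg: "(\<Sum>l=1..n. x l) / real n \<le> z" and b: "b \<le> 0"
  shows "1 \<le> (\<Prod>l=1..n. (x l / z) powr b)"
proof -
  have cn: "card {1..n} = n" by simp
  have ne: "{1..n} \<noteq> {}" using n by auto
  have "(\<Prod>l=1..n. x l) powr (1 / real n) \<le> (\<Sum>l=1..n. x l / real n)"
  proof -
    have "(\<Prod>l\<in>{1..n}. x l) powr (1 / real (card {1..n})) \<le> (\<Sum>l\<in>{1..n}. x l / real (card {1..n}))"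
      by (rule arith_geom_mean) (use ne xpos in \<open>auto simp: less_imp_le\<close>)
    then show ?thesis by (simp only: cn)
  qed
  also have "\<dots> = (\<Sum>l=1..n. x l) / real n" by (simp add: sum_divide_distrib)
  finally have g: "(\<Prod>l=1..n. x l) powr (1 / real n) \<le> z" using avg by linarith
  have Ppos: "(\<Prod>l=1..n. x l) > 0" using xpos by (intro prod_pos) auto
  have "((\<Prod>l=1..n. x l) powr (1 / real n)) ^ n = ((\<Prod>l=1..n. x l) powr (1 / real n)) powr (real n)"
  proof -
    have pp: "0 < (\<Prod>l=1..n. x l) powr (1 / real n)" using Ppos by (metis powr_gt_zero less_irrefl)
    show ?thesis by (rule powr_realpow[OF pp, symmetric])
  qed
  also have "\<dots> = (\<Prod>l=1..n. x l)" using n Ppos by (simp add: powr_powr)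
  finally have "(\<Prod>l=1..n. x l) = ((\<Prod>l=1..n. x l) powr (1 / real n)) ^ n" ..
  also have "\<dots> \<le> z ^ n" using g by (intro power_mono) auto
  finally have Pz: "(\<Prod>l=1..n. x l) \<le> z ^ n" .
  have Q: "(\<Prod>l=1..n. x l / z) = (\<Prod>l=1..n. x l) / z ^ n"
    by (simp add: prod_dividef)
  have Qpos: "(\<Prod>l=1..n. x l / z) > 0" using Q Ppos z by simp
  have Qle: "(\<Prod>l=1..n. x l / z) \<le> 1" using Q Pz z by (simp add: divide_le_eq_1)
  have "(\<Prod>l=1..n. x l / z) powr (- b) \<le> 1"
    using Qpos Qle b by (intro powr_le1) auto
  moreover have "(\<Prod>l=1..n. x l / z) powr (- b) > 0" using Qpos by (metis powr_gt_zero less_irrefl)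
  ultimately have "1 \<le> inverse ((\<Prod>l=1..n. x l / z) powr (- b))"
    using one_le_inverse by blast
  also have "inverse ((\<Prod>l=1..n. x l / z) powr (- b)) = (\<Prod>l=1..n. x l / z) powr b"
    by (simp add: powr_minus)
  also have "\<dots> = (\<Prod>l=1..n. (x l / z) powr b)" by (rule prod_powr_distrib)
  finally show ?thesis .
qed

lemma factor_id:
  fixes y z a c :: real
  assumes "y > 0" "z > 0"
  shows "y powr (a - 1) * (y / z) powr (c - a) = z powr (a - c) * y powr (c - 1)"
proof -
  have "y powr (a - 1) * (y / z) powr (c - a) = y powr (a - 1) * y powr (c - a) / z powr (c - a)"
    using assms by (simp add: powr_divide)
  also have "y powr (a - 1) * y powr (c - a) = y powr (c - 1)" by (simp add: powr_add[symmetric])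
  also have "1 / z powr (c - a) = z powr (a - c)"
    by (simp add: powr_diff)
  ultimately show ?thesis by (metis times_divide_eq_right mult_1_right mult.commute)
qed



lemma emb_meas: "simplex_embed k \<in> measurable (PiM {1..k} (\<lambda>_. lborel)) (PiM {0..k} (\<lambda>_. borel))"
  unfolding simplex_embed_def
proof (rule measurable_restrict)
  fix i assume i: "i \<in> {0..k}"
  show "(\<lambda>y. if i = 0 then 1 - (\<Sum>j = 1..k. y j) else y i) \<in> measurable (PiM {1..k} (\<lambda>_. lborel)) borel"
  proof (cases "i = 0")
    case True then show ?thesis by simp measurable
  next
    case False
    then have "i \<in> {1..k}" using i by auto
    then show ?thesis using False by simp measurable
  qed
qed

lemma pdf_meas: "dirichlet_pdf k a \<in> borel_measurable (PiM {0..k} (\<lambda>_. borel))"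
  unfolding dirichlet_pdf_def by measurable

lemma h_meas: fixes z b :: "nat \<Rightarrow> real" shows "(\<lambda>x. ennreal (\<Prod>i\<in>{1..k}. (x i / z i) powr (b i))) \<in> borel_measurable (PiM {0..k} (\<lambda>_. borel))"
  by measurable

lemma mbeta_pos: "\<forall>i\<in>{0..k}. a i > 0 \<Longrightarrow> mbeta k a > 0"
  unfolding mbeta_def
  by (intro divide_pos_pos prod_pos Gamma_real_pos sum_pos) auto

lemma E_h:
  fixes a c z :: "nat \<Rightarrow> real" and k :: nat
  assumes apos: "\<forall>i\<in>{0..k}. a i > 0" and cpos: "\<forall>i\<in>{1..k}. c i > 0" and c0: "c 0 = a 0"
    and zpos: "\<forall>i\<in>{0..k}. z i > 0"
  shows "(\<integral>\<^sup>+x. ennreal (\<Prod>i\<in>{1..k}. (x i / z i) powr (c i - a i)) \<partial>dirichlet k a)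
       = ennreal (mbeta k c / mbeta k a * (\<Prod>i=1..k. z i powr a i / z i powr c i))"
proof -
  define P where "P = PiM {1..k} (\<lambda>_. lborel :: real measure)"
  define N where "N = PiM {0..k} (\<lambda>_. borel :: real measure)"
  define Sp where "Sp = {y. (\<forall>i\<in>{1..k}. y i > 0) \<and> (\<Sum>j=1..k. y j) < (1::real)}"
  define g where "g = (\<lambda>y. ennreal (indicator Sp y * dirichlet_pdf k a (simplex_embed k y)))"
  define h where "h = (\<lambda>x::nat\<Rightarrow>real. ennreal (\<Prod>i\<in>{1..k}. (x i / z i) powr (c i - a i)))"
  define K where "K = (1 / mbeta k a) * (\<Prod>i=1..k. z i powr (a i - c i))"
  have Ba: "mbeta k a > 0" using mbeta_pos apos by blast
  have Knn: "K \<ge> 0" unfolding K_def using Ba by (intro mult_nonneg_nonneg prod_nonneg) auto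
  have em: "simplex_embed k \<in> measurable P N" unfolding P_def N_def by (rule emb_meas)
  have hm: "h \<in> borel_measurable N" unfolding h_def N_def by (rule h_meas)
  have gm: "g \<in> borel_measurable P" unfolding g_def Sp_def P_def
    using emb_meas pdf_meas by measurable
  have dir: "dirichlet k a = distr (density P g) N (simplex_embed k)"
    unfolding dirichlet_def P_def N_def g_def Sp_def by simp
  have "(\<integral>\<^sup>+x. h x \<partial>dirichlet k a) = (\<integral>\<^sup>+y. h (simplex_embed k y) \<partial>density P g)"
    unfolding dir using em hm by (subst nn_integral_distr) auto
  also have "\<dots> = (\<integral>\<^sup>+y. g y * h (simplex_embed k y) \<partial>P)"
    using gm hm em by (subst nn_integral_density) auto
  also have "\<dots> = (\<integral>\<^sup>+y. ennreal K * ennreal (dirF {1..k} 1 (a 0) c y) \<partial>P)"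
  proof (intro nn_integral_cong)
    fix y :: "nat \<Rightarrow> real"
    show "g y * h (simplex_embed k y) = ennreal K * ennreal (dirF {1..k} 1 (a 0) c y)"
    proof (cases "y \<in> Sp")
      case False
      then show ?thesis unfolding g_def dirF_def Sp_def by simp
    next
      case True
      define s where "s = (\<Sum>j=1..k. y j)"
      have ypos: "\<forall>i\<in>{1..k}. y i > 0" and s1: "s < 1" using True unfolding Sp_def s_def by auto
      have e0: "simplex_embed k y 0 = 1 - s" unfolding simplex_embed_def s_def by simp
      have ei: "\<And>i. i \<in> {1..k} \<Longrightarrow> simplex_embed k y i = y i" unfolding simplex_embed_def by auto
      have pdf: "dirichlet_pdf k a (simplex_embed k y) = (1 / mbeta k a) * ((1 - s) powr (a 0 - 1) * (\<Prod>i=1..k. y i powr (a i - 1)))"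
      proof -
        have pc: "(\<Prod>i=1..k. simplex_embed k y i powr (a i - 1)) = (\<Prod>i=1..k. y i powr (a i - 1))"
          by (intro prod.cong refl) (simp add: ei)
        show ?thesis unfolding dirichlet_pdf_def
          using pc by (simp add: prod.atLeast_Suc_atMost[of 0 k] e0)
      qed
      have hh: "h (simplex_embed k y) = ennreal (\<Prod>i=1..k. (y i / z i) powr (c i - a i))"
      proof -
        have "(\<Prod>i=1..k. (simplex_embed k y i / z i) powr (c i - a i)) = (\<Prod>i=1..k. (y i / z i) powr (c i - a i))"
          by (intro prod.cong refl) (simp add: ei)
        then show ?thesis unfolding h_def by simp
      qed
      have fac: "(\<Prod>i=1..k. y i powr (a i - 1)) * (\<Prod>i=1..k. (y i / z i) powr (c i - a i))
          = (\<Prod>i=1..k. z i powr (a i - c i)) * (\<Prod>i=1..k. y i powr (c i - 1))"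
        unfolding prod.distrib[symmetric] using ypos zpos
        by (intro prod.cong refl factor_id) auto
      have dF: "dirF {1..k} 1 (a 0) c y = (1 - s) powr (a 0 - 1) * (\<Prod>i=1..k. y i powr (c i - 1))"
        unfolding dirF_def using True unfolding Sp_def s_def by simp
      have nn1: "0 \<le> (1 / mbeta k a) * ((1 - s) powr (a 0 - 1) * (\<Prod>i=1..k. y i powr (a i - 1)))"
        using Ba by (intro mult_nonneg_nonneg prod_nonneg) auto
      have ind: "indicator Sp y * dirichlet_pdf k a (simplex_embed k y) = (1 / mbeta k a) * ((1 - s) powr (a 0 - 1) * (\<Prod>i=1..k. y i powr (a i - 1)))"
        using True pdf by simp
      have alg: "(1 / mbeta k a) * ((1 - s) powr (a 0 - 1) * (\<Prod>i=1..k. y i powr (a i - 1))) * (\<Prod>i=1..k. (y i / z i) powr (c i - a i))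
          = K * ((1 - s) powr (a 0 - 1) * (\<Prod>i=1..k. y i powr (c i - 1)))"
      proof -
        have "(1 / mbeta k a) * ((1 - s) powr (a 0 - 1) * (\<Prod>i=1..k. y i powr (a i - 1))) * (\<Prod>i=1..k. (y i / z i) powr (c i - a i))
          = (1 / mbeta k a) * (1 - s) powr (a 0 - 1) * ((\<Prod>i=1..k. y i powr (a i - 1)) * (\<Prod>i=1..k. (y i / z i) powr (c i - a i)))"
          by (simp only: mult.assoc)
        also have "\<dots> = (1 / mbeta k a) * (1 - s) powr (a 0 - 1) * ((\<Prod>i=1..k. z i powr (a i - c i)) * (\<Prod>i=1..k. y i powr (c i - 1)))"
          by (simp only: fac)
        also have "\<dots> = K * ((1 - s) powr (a 0 - 1) * (\<Prod>i=1..k. y i powr (c i - 1)))"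
          unfolding K_def by (simp only: mult_ac)
        finally show ?thesis .
      qed
      show ?thesis
        unfolding g_def hh dF ind
        by (simp only: ennreal_mult'[OF nn1, symmetric] ennreal_mult'[OF Knn, symmetric] alg)
    qed
  qed
  also have "\<dots> = ennreal K * (\<integral>\<^sup>+y. ennreal (dirF {1..k} 1 (a 0) c y) \<partial>P)"
    unfolding P_def by (rule nn_integral_cmult[OF dirF_meas])
  also have "(\<integral>\<^sup>+y. ennreal (dirF {1..k} 1 (a 0) c y) \<partial>P)
      = ennreal (1 powr (a 0 + (\<Sum>i\<in>{1..k}. c i) - 1) * ((\<Prod>i\<in>{1..k}. Gamma (c i)) * Gamma (a 0) / Gamma (a 0 + (\<Sum>i\<in>{1..k}. c i))))"
    unfolding P_def by (rule dir_int) (use cpos apos in auto)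
  also have "ennreal K * \<dots> = ennreal (mbeta k c / mbeta k a * (\<Prod>i=1..k. z i powr a i / z i powr c i))"
  proof -
    have mc: "mbeta k c = (\<Prod>i\<in>{1..k}. Gamma (c i)) * Gamma (a 0) / Gamma (a 0 + (\<Sum>i\<in>{1..k}. c i))"
      unfolding mbeta_def by (simp add: prod.atLeast_Suc_atMost[of 0 k] sum.atLeast_Suc_atMost[of 0 k] c0 mult_ac)
    have pz: "(\<Prod>i=1..k. z i powr a i / z i powr c i) = (\<Prod>i=1..k. z i powr (a i - c i))"
      by (intro prod.cong refl) (simp add: powr_diff)
    show ?thesis
      unfolding pz by (subst ennreal_mult'[OF Knn, symmetric]) (simp add: K_def mc mult_ac)
  qed
  finally show ?thesis unfolding h_def .
qed

lemma AEdir: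
  fixes a :: "nat \<Rightarrow> real"
  shows "AE x in dirichlet k a. \<forall>i\<in>{0..k}. x i > 0"
proof -
  define P where "P = PiM {1..k} (\<lambda>_. lborel :: real measure)"
  define N where "N = PiM {0..k} (\<lambda>_. borel :: real measure)"
  define Sp where "Sp = {y. (\<forall>i\<in>{1..k}. y i > 0) \<and> (\<Sum>j=1..k. y j) < (1::real)}"
  define g where "g = (\<lambda>y. ennreal (indicator Sp y * dirichlet_pdf k a (simplex_embed k y)))"
  have em: "simplex_embed k \<in> measurable P N" unfolding P_def N_def by (rule emb_meas)
  have gm: "g \<in> borel_measurable P" unfolding g_def Sp_def P_def
    using emb_meas pdf_meas by measurable
  have dir: "dirichlet k a = distr (density P g) N (simplex_embed k)"
    unfolding dirichlet_def P_def N_def g_def Sp_def by simp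
  have pm: "{x \<in> space N. \<forall>i\<in>{0..k}. x i > 0} \<in> sets N" unfolding N_def by measurable
  have "AE y in P. 0 < g y \<longrightarrow> (\<forall>i\<in>{0..k}. simplex_embed k y i > 0)"
  proof (rule AE_I2, intro impI ballI)
    fix y i assume gy: "0 < g y" and i: "i \<in> {0..k}"
    have "y \<in> Sp" using gy unfolding g_def by (cases "y \<in> Sp") auto
    then show "simplex_embed k y i > 0" using i unfolding Sp_def simplex_embed_def by auto
  qed
  then have "AE y in density P g. \<forall>i\<in>{0..k}. simplex_embed k y i > 0"
    using gm by (subst AE_density) auto
  then show ?thesis unfolding dir using em pm by (subst AE_distr_iff) auto
qed



theorem theorem12:
  fixes M :: "'s measure" and k n :: nat and a z :: "nat \<Rightarrow> real"
    and Xs :: "nat \<Rightarrow> 's \<Rightarrow> (nat \<Rightarrow> real)"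
  assumes "prob_space M"
    and "n \<ge> 1"
    and apos: "\<forall>i\<in>{0..k}. a i > 0"
    and rv: "\<forall>l\<in>{1..n}. Xs l \<in> measurable M (PiM {0..k} (\<lambda>_. borel))"
    and indep: "prob_space.indep_vars M (\<lambda>_. PiM {0..k} (\<lambda>_. borel)) Xs {1..n}"
    and dist: "\<forall>l\<in>{1..n}. distr M (PiM {0..k} (\<lambda>_. borel)) (Xs l) = dirichlet k a"
    and zpos: "\<forall>i\<in>{0..k}. z i > 0"
    and zsum: "(\<Sum>i=0..k. z i) = 1"
    and zmu: "\<forall>i\<in>{1..k}. z i \<le> a i / (\<Sum>l=0..k. a l)"
  shows "measure M {\<omega> \<in> space M. \<forall>i\<in>{1..k}. (\<Sum>l=1..n. Xs l \<omega> i) / real n \<le> z i}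
         \<le> ((mbeta k (\<lambda>i. a 0 * z i / z 0) / mbeta k a)
             * (\<Prod>i=1..k. z i powr a i / z i powr (a 0 * z i / z 0))) ^ n"
proof -
  interpret prob_space M by fact
  define N where "N = PiM {0..k} (\<lambda>_. borel :: real measure)"
  define S where "S = (\<Sum>l=0..k. a l)"
  define c where "c = (\<lambda>i. a 0 * z i / z 0)"
  define E where "E = {\<omega> \<in> space M. \<forall>i\<in>{1..k}. (\<Sum>l=1..n. Xs l \<omega> i) / real n \<le> z i}"
  have a0: "a 0 > 0" and z0: "z 0 > 0" using apos zpos by auto
  have Ssplit: "S = a 0 + (\<Sum>l=1..k. a l)" unfolding S_def by (simp add: sum.atLeast_Suc_atMost[of 0 k])
  have zsplit: "z 0 + (\<Sum>l=1..k. z l) = 1" using zsum by (simp add: sum.atLeast_Suc_atMost[of 0 k])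
  have Spos: "S > 0" using Ssplit a0 apos by (smt (verit) atLeastAtMost_iff sum_nonneg le0)
  have "(\<Sum>l=1..k. z l) \<le> (\<Sum>l=1..k. a l / S)" using zmu unfolding S_def by (intro sum_mono) auto
  also have "\<dots> = (S - a 0) / S" using Ssplit by (simp add: sum_divide_distrib)
  finally have "a 0 / S \<le> z 0" using zsplit Spos by (simp add: diff_divide_distrib)
  then have a0S: "a 0 \<le> S * z 0" using Spos by (simp add: divide_le_eq mult.commute)
  have cle: "\<forall>i\<in>{1..k}. c i \<le> a i"
  proof
    fix i assume i: "i \<in> {1..k}"
    have "c i = a 0 * z i / z 0" by (simp add: c_def)
    also have "\<dots> \<le> S * z i" using a0S z0 zpos i
      by (simp add: divide_le_eq mult.commute mult_right_mono)
    also have "\<dots> \<le> a i" using zmu i Spos unfolding S_def by (simp add: le_divide_eq mult.commute)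
    finally show "c i \<le> a i" .
  qed
  have cpos: "\<forall>i\<in>{1..k}. c i > 0" using a0 z0 zpos unfolding c_def by auto
  have c0: "c 0 = a 0" using z0 unfolding c_def by simp
  define h where "h = (\<lambda>x::nat\<Rightarrow>real. ennreal (\<Prod>i\<in>{1..k}. (x i / z i) powr (c i - a i)))"
  define R where "R = mbeta k c / mbeta k a * (\<Prod>i=1..k. z i powr a i / z i powr c i)"
  have cpos0: "\<forall>i\<in>{0..k}. c i > 0"
  proof
    fix i assume "i \<in> {0..k}"
    then show "c i > 0" using cpos c0 a0 by (cases "i = 0") auto
  qed
  have Rnn: "R \<ge> 0" unfolding R_def using mbeta_pos[OF apos] mbeta_pos[OF cpos0]
    by (intro mult_nonneg_nonneg divide_nonneg_pos prod_nonneg divide_nonneg_nonneg) auto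
  have hm: "h \<in> borel_measurable N" unfolding h_def N_def by (rule h_meas)
  have rvN: "\<And>l. l \<in> {1..n} \<Longrightarrow> Xs l \<in> measurable M N" using rv unfolding N_def by auto
  have Eh: "\<And>l. l \<in> {1..n} \<Longrightarrow> (\<integral>\<^sup>+\<omega>. h (Xs l \<omega>) \<partial>M) = ennreal R"
  proof -
    fix l assume l: "l \<in> {1..n}"
    have "(\<integral>\<^sup>+\<omega>. h (Xs l \<omega>) \<partial>M) = (\<integral>\<^sup>+x. h x \<partial>distr M N (Xs l))"
      using rvN[OF l] hm by (subst nn_integral_distr) auto
    also have "distr M N (Xs l) = dirichlet k a" using dist l unfolding N_def by auto
    also have "(\<integral>\<^sup>+x. h x \<partial>dirichlet k a) = ennreal R"
      unfolding h_def R_def by (rule E_h[OF apos cpos c0 zpos])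
    finally show "(\<integral>\<^sup>+\<omega>. h (Xs l \<omega>) \<partial>M) = ennreal R" .
  qed
  have indep': "indep_vars (\<lambda>_. borel) (\<lambda>l \<omega>. h (Xs l \<omega>)) {1..n}"
    by (rule indep_vars_compose2[OF indep]) (use hm in \<open>simp add: N_def\<close>)
  have prodint: "(\<integral>\<^sup>+\<omega>. (\<Prod>l\<in>{1..n}. h (Xs l \<omega>)) \<partial>M) = ennreal (R ^ n)"
  proof -
    have "(\<integral>\<^sup>+\<omega>. (\<Prod>l\<in>{1..n}. h (Xs l \<omega>)) \<partial>M) = (\<Prod>l\<in>{1..n}. \<integral>\<^sup>+\<omega>. h (Xs l \<omega>) \<partial>M)"
      by (rule indep_vars_nn_integral[OF _ indep']) auto
    also have "\<dots> = (\<Prod>l\<in>{1..n}. ennreal R)" using Eh by (intro prod.cong) auto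
    also have "\<dots> = ennreal (R ^ n)" using Rnn by (simp add: ennreal_power)
    finally show ?thesis .
  qed
  have Xc: "\<And>l i. l \<in> {1..n} \<Longrightarrow> i \<in> {0..k} \<Longrightarrow> (\<lambda>\<omega>. Xs l \<omega> i) \<in> borel_measurable M"
  proof -
    fix l i assume l: "l \<in> {1..n}" and i: "i \<in> {0..k}"
    show "(\<lambda>\<omega>. Xs l \<omega> i) \<in> borel_measurable M"
      using measurable_compose[OF rv[rule_format, OF l] measurable_component_singleton[OF i]] by simp
  qed
  have Em: "E \<in> sets M"
    unfolding E_def
  proof (rule sets.sets_Collect_finite_All)
    fix i assume i: "i \<in> {1..k}"
    have [measurable]: "(\<lambda>\<omega>. (\<Sum>l=1..n. Xs l \<omega> i) / real n) \<in> borel_measurable M"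
      using Xc i by (intro borel_measurable_divide borel_measurable_sum) auto
    show "{\<omega> \<in> space M. (\<Sum>l=1..n. Xs l \<omega> i) / real n \<le> z i} \<in> sets M" by measurable
  qed simp
  have AEpos: "AE \<omega> in M. \<forall>l\<in>{1..n}. \<forall>i\<in>{0..k}. Xs l \<omega> i > 0"
  proof (rule eventually_ball_finite, simp, rule ballI)
    fix l assume l: "l \<in> {1..n}"
    have pm: "{x \<in> space N. \<forall>i\<in>{0..k}. x i > 0} \<in> sets N" unfolding N_def by measurable
    have "AE x in distr M N (Xs l). \<forall>i\<in>{0..k}. x i > 0"
    proof -
      have "distr M N (Xs l) = dirichlet k a" using dist l unfolding N_def by blast
      then show ?thesis using AEdir[of k a] by metis
    qed
    then show "AE \<omega> in M. \<forall>i\<in>{0..k}. Xs l \<omega> i > 0"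
      using rvN[OF l] pm by (subst (asm) AE_distr_iff) auto
  qed
  have pw: "AE \<omega> in M. indicator E \<omega> \<le> (\<Prod>l\<in>{1..n}. h (Xs l \<omega>))"
    using AEpos
  proof eventually_elim
    case (elim \<omega>)
    show ?case
    proof (cases "\<omega> \<in> E")
      case False then show ?thesis by simp
    next
      case True
      have "(\<Prod>l\<in>{1..n}. h (Xs l \<omega>)) = ennreal (\<Prod>l\<in>{1..n}. \<Prod>i\<in>{1..k}. (Xs l \<omega> i / z i) powr (c i - a i))"
        unfolding h_def by (subst prod_ennreal) (auto intro: prod_nonneg)
      also have "(\<Prod>l\<in>{1..n}. \<Prod>i\<in>{1..k}. (Xs l \<omega> i / z i) powr (c i - a i))
          = (\<Prod>i\<in>{1..k}. \<Prod>l\<in>{1..n}. (Xs l \<omega> i / z i) powr (c i - a i))"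
        by (rule prod.swap)
      finally have eq: "(\<Prod>l\<in>{1..n}. h (Xs l \<omega>)) = ennreal (\<Prod>i\<in>{1..k}. \<Prod>l\<in>{1..n}. (Xs l \<omega> i / z i) powr (c i - a i))" .
      have "1 \<le> (\<Prod>i\<in>{1..k}. \<Prod>l\<in>{1..n}. (Xs l \<omega> i / z i) powr (c i - a i))"
      proof (rule prod_ge_1)
        fix i assume i: "i \<in> {1..k}"
        show "1 \<le> (\<Prod>l\<in>{1..n}. (Xs l \<omega> i / z i) powr (c i - a i))"
          by (rule amgm_step[where x = "\<lambda>l. Xs l \<omega> i"])
             (use \<open>n \<ge> 1\<close> elim i zpos True cle in \<open>auto simp: E_def\<close>)
      qed
      then show ?thesis using True eq by (simp add: ennreal_leI)
    qed
  qed
  have "emeasure M E = (\<integral>\<^sup>+\<omega>. indicator E \<omega> \<partial>M)" using Em by simp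
  also have "\<dots> \<le> (\<integral>\<^sup>+\<omega>. (\<Prod>l\<in>{1..n}. h (Xs l \<omega>)) \<partial>M)" by (rule nn_integral_mono_AE[OF pw])
  also have "\<dots> = ennreal (R ^ n)" by (rule prodint)
  finally have "ennreal (measure M E) \<le> ennreal (R ^ n)" by (simp add: emeasure_eq_measure)
  then have "measure M E \<le> R ^ n" using Rnn by (simp add: ennreal_le_iff)
  then show ?thesis unfolding E_def R_def c_def .
qed

end
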